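(* Every cograph admits a canonical dominating set.
   Context: All graphs are finite, simple and undirected. The union $G_1\cup G_2$ of two vertex-disjoint graphs has vertex set $V(G_1)\cup V(G_2)$ and edge set $E(G_1)\cup E(G_2)$; the join $G_1\vee G_2$ additionally contains all edges $vw$ with $v\in V(G_1)$, $w\in V(G_2)$. Cographs are defined recursively: a single vertex is a cograph, and the union and the join of two cographs are cographs. A set $D\subseteq V(G)$ is a dominating set if every vertex of $G$ is in $D$ or adjacent to a vertex of $D$. Two dominating sets $D,D'$ are adjacent if $|D\triangle D'|=1$. For dominating sets $D_p,D_q$ and an integer $k>0$, write $D_p\leftrightarrow_k D_q$ if there is a sequence $D_0=D_p,\dots,D_\ell=D_q$ ($\ell\ge0$) of dominating sets of $G$ with consecutive sets adjacent and $|D_i|\le k$ for all $i$. A minimum dominating set $D^*$ of $G$ is canonical if $D\leftrightarrow_{|D|+1} D^*$ for every dominating set $D$ of $G$. *)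

theory Defs
  imports Main
begin

text \<open>A (simple, undirected) graph is a pair (V, E) with E a set of 2-element subsets of V.\<close>

definition join_edges :: "'a set \<Rightarrow> 'a set \<Rightarrow> 'a set set" where
  "join_edges V1 V2 = {{v, w} | v w. v \<in> V1 \<and> w \<in> V2}"

inductive cograph :: "'a set \<Rightarrow> 'a set set \<Rightarrow> bool" where
  single: "cograph {v} {}"
| union: "\<lbrakk>cograph V1 E1; cograph V2 E2; V1 \<inter> V2 = {}\<rbrakk>
           \<Longrightarrow> cograph (V1 \<union> V2) (E1 \<union> E2)"
| join: "\<lbrakk>cograph V1 E1; cograph V2 E2; V1 \<inter> V2 = {}\<rbrakk>
           \<Longrightarrow> cograph (V1 \<union> V2) (E1 \<union> E2 \<union> join_edges V1 V2)"

definition dominating :: "'a set \<Rightarrow> 'a set set \<Rightarrow> 'a set \<Rightarrow> bool" where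
  "dominating V E D \<longleftrightarrow> D \<subseteq> V \<and> (\<forall>v\<in>V. v \<in> D \<or> (\<exists>u\<in>D. {u, v} \<in> E))"

definition min_dominating :: "'a set \<Rightarrow> 'a set set \<Rightarrow> 'a set \<Rightarrow> bool" where
  "min_dominating V E D \<longleftrightarrow> dominating V E D \<and>
     (\<forall>D'. dominating V E D' \<longrightarrow> card D \<le> card D')"

definition symdiff :: "'a set \<Rightarrow> 'a set \<Rightarrow> 'a set" where
  "symdiff A B = (A - B) \<union> (B - A)"

definition reconf :: "'a set \<Rightarrow> 'a set set \<Rightarrow> nat \<Rightarrow> 'a set \<Rightarrow> 'a set \<Rightarrow> bool" where
  "reconf V E k Dp Dq \<longleftrightarrow> (\<exists>xs. xs \<noteq> [] \<and> hd xs = Dp \<and> last xs = Dq \<and>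
     (\<forall>D\<in>set xs. dominating V E D \<and> card D \<le> k) \<and>
     (\<forall>i. Suc i < length xs \<longrightarrow> card (symdiff (xs ! i) (xs ! Suc i)) = 1))"

definition canonical :: "'a set \<Rightarrow> 'a set set \<Rightarrow> 'a set \<Rightarrow> bool" where
  "canonical V E Ds \<longleftrightarrow> min_dominating V E Ds \<and>
     (\<forall>D. dominating V E D \<longrightarrow> reconf V E (card D + 1) D Ds)"

end

theory Submission
  imports Defs
begin

inductive rc :: "'a set \<Rightarrow> 'a set set \<Rightarrow> nat \<Rightarrow> 'a set \<Rightarrow> 'a set \<Rightarrow> bool" for V E k where
  rc_refl: "dominating V E A \<Longrightarrow> card A \<le> k \<Longrightarrow> rc V E k A A"
| rc_step: "dominating V E A \<Longrightarrow> card A \<le> k \<Longrightarrow> card (symdiff A B) = 1 \<Longrightarrow> rc V E k B C \<Longrightarrow> rc V E k A C"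

lemma rc_dom_hd: "rc V E k A B \<Longrightarrow> dominating V E A"
  by (induction rule: rc.induct) auto

lemma rc_reconf: "rc V E k A B \<Longrightarrow> reconf V E k A B"
proof (induction rule: rc.induct)
  case (rc_refl A)
  then show ?case unfolding reconf_def by (intro exI[of _ "[A]"]) auto
next
  case (rc_step A B C)
  then obtain xs where xs: "xs \<noteq> []" "hd xs = B" "last xs = C"
     "\<forall>D\<in>set xs. dominating V E D \<and> card D \<le> k"
     "\<forall>i. Suc i < length xs \<longrightarrow> card (symdiff (xs ! i) (xs ! Suc i)) = 1"
    unfolding reconf_def by blast
  have "\<forall>i. Suc i < length (A # xs) \<longrightarrow> card (symdiff ((A#xs) ! i) ((A#xs) ! Suc i)) = 1"
  proof (intro allI impI)
    fix i assume "Suc i < length (A # xs)"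
    then show "card (symdiff ((A#xs) ! i) ((A#xs) ! Suc i)) = 1"
      using xs rc_step.hyps(3) by (cases i) (auto simp: hd_conv_nth)
  qed
  then show ?case unfolding reconf_def using xs rc_step.hyps
    by (intro exI[of _ "A # xs"]) auto
qed

lemma reconf_rc_aux: "xs \<noteq> [] \<Longrightarrow> (\<forall>D\<in>set xs. dominating V E D \<and> card D \<le> k) \<Longrightarrow>
  (\<forall>i. Suc i < length xs \<longrightarrow> card (symdiff (xs ! i) (xs ! Suc i)) = 1) \<Longrightarrow> rc V E k (hd xs) (last xs)"
proof (induction xs)
  case Nil then show ?case by simp
next
  case (Cons a xs)
  show ?case
  proof (cases "xs = []")
    case True then show ?thesis using Cons.prems by (auto intro: rc_refl)
  next
    case False
    have "\<forall>i. Suc i < length xs \<longrightarrow> card (symdiff (xs ! i) (xs ! Suc i)) = 1"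
    proof (intro allI impI)
      fix i assume "Suc i < length xs"
      then show "card (symdiff (xs ! i) (xs ! Suc i)) = 1" using Cons.prems(3)[rule_format, of "Suc i"] by simp
    qed
    then have "rc V E k (hd xs) (last xs)" using Cons False by auto
    moreover have "card (symdiff a (hd xs)) = 1" using Cons.prems(3)[rule_format, of 0] False
      by (simp add: hd_conv_nth)
    ultimately show ?thesis using Cons.prems False by (auto intro: rc_step)
  qed
qed

lemma reconf_rc: "reconf V E k A B \<Longrightarrow> rc V E k A B"
  unfolding reconf_def using reconf_rc_aux by blast

lemma rc_trans: "rc V E k A B \<Longrightarrow> rc V E k B C \<Longrightarrow> rc V E k A C"
  by (induction rule: rc.induct) (auto intro: rc_step)

lemma rc_mono: "rc V E k A B \<Longrightarrow> k \<le> k' \<Longrightarrow> rc V E k' A B"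
  by (induction rule: rc.induct) (auto intro: rc_step rc_refl)

lemma dom_mono: "dominating V E T \<Longrightarrow> T \<subseteq> B \<Longrightarrow> B \<subseteq> V \<Longrightarrow> dominating V E B"
  unfolding dominating_def by blast

lemma rc_down: assumes "finite V" "dominating V E T" "T \<subseteq> B" "B \<subseteq> V" "card B \<le> k"
  shows "rc V E k B T"
  using assms
proof (induction "card (B - T)" arbitrary: B rule: less_induct)
  case less
  show ?case
  proof (cases "B = T")
    case True then show ?thesis using less by (auto intro: rc_refl)
  next
    case False
    then obtain x where x: "x \<in> B" "x \<notin> T" using less.prems by blast
    have fB: "finite B" using less.prems finite_subset by blast
    have "B - {x} - T = (B - T) - {x}" by blast
    then have "card (B - {x} - T) < card (B - T)" using x fB
      by (metis DiffI card_Diff1_less finite_Diff)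
    moreover have "card (B - {x}) \<le> k" using less.prems fB
      by (meson card_Diff1_le le_trans)
    ultimately have "rc V E k (B - {x}) T" using less x by (intro less.hyps) auto
    moreover have "symdiff B (B - {x}) = {x}" using x unfolding symdiff_def by blast
    moreover have "dominating V E B" using less.prems dom_mono by blast
    ultimately show ?thesis using less.prems by (intro rc_step[of V E B k "B - {x}" T]) auto
  qed
qed

lemma rc_up: assumes "finite V" "dominating V E A" "A \<subseteq> B" "B \<subseteq> V" "card B \<le> k"
  shows "rc V E k A B"
  using assms
proof (induction "card (B - A)" arbitrary: A rule: less_induct)
  case less
  have fB: "finite B" using less.prems finite_subset by blast
  show ?case
  proof (cases "A = B")
    case True then show ?thesis using less by (auto intro: rc_refl)
  next
    case False
    then obtain x where x: "x \<in> B" "x \<notin> A" using less.prems by blast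
    have "B - insert x A = (B - A) - {x}" by blast
    then have "card (B - insert x A) < card (B - A)" using x fB
      by (metis DiffI card_Diff1_less finite_Diff)
    moreover have "dominating V E (insert x A)" using less.prems x dom_mono[of V E A "insert x A"] by auto
    ultimately have "rc V E k (insert x A) B" using less x by (intro less.hyps) auto
    moreover have "symdiff A (insert x A) = {x}" using x unfolding symdiff_def by blast
    moreover have "card A \<le> k" using less.prems fB card_mono le_trans by metis
    ultimately show ?thesis using less.prems by (intro rc_step[of V E A k "insert x A" B]) auto
  qed
qed

lemma dom_union: "dominating V1 E1 X \<Longrightarrow> dominating V2 E2 Z \<Longrightarrow> dominating (V1\<union>V2) (E1\<union>E2) (X\<union>Z)"
  unfolding dominating_def by blast

lemma dom_restrict: assumes "dominating (V1\<union>V2) (E1\<union>E2) D" "\<forall>e\<in>E1. e \<subseteq> V1" "\<forall>e\<in>E2. e\<subseteq>V2"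
  "V1\<inter>V2={}" shows "dominating V1 E1 (D\<inter>V1)"
  unfolding dominating_def
proof (intro conjI ballI)
  fix v assume v: "v \<in> V1"
  then have "v \<in> D \<or> (\<exists>u\<in>D. {u, v} \<in> E1 \<union> E2)" using assms(1) unfolding dominating_def by blast
  then show "v \<in> D \<inter> V1 \<or> (\<exists>u\<in>D \<inter> V1. {u, v} \<in> E1)"
  proof
    assume "\<exists>u\<in>D. {u, v} \<in> E1 \<union> E2"
    then obtain u where u: "u \<in> D" "{u,v} \<in> E1 \<union> E2" by blast
    show ?thesis
    proof (cases "{u,v} \<in> E1")
      case True then show ?thesis using assms(2) u by blast
    next
      case False then have "{u,v} \<in> E2" using u by blast
      then show ?thesis using assms(3,4) v by blast
    qed
  qed (use v in blast)
qed auto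

lemma rc_lift: assumes "rc V1 E1 k X Y" "dominating V2 E2 Z" "V1 \<inter> V2 = {}" "finite V1" "finite V2"
  shows "rc (V1 \<union> V2) (E1 \<union> E2) (k + card Z) (X \<union> Z) (Y \<union> Z)"
  using assms(1)
proof induction
  case (rc_refl A)
  have "card (A \<union> Z) \<le> card A + card Z" by (rule card_Un_le)
  then have c: "card (A \<union> Z) \<le> k + card Z" using rc_refl.hyps(2) by linarith
  show ?case by (rule rc.rc_refl[OF dom_union[OF rc_refl.hyps(1) assms(2)] c])
next
  case (rc_step A B C)
  have "card (A \<union> Z) \<le> card A + card Z" by (rule card_Un_le)
  then have c: "card (A \<union> Z) \<le> k + card Z" using rc_step.hyps(2) by linarith
  have B: "B \<subseteq> V1" using rc_dom_hd[OF rc_step.hyps(4)] unfolding dominating_def by blast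
  have A: "A \<subseteq> V1" using rc_step.hyps(1) unfolding dominating_def by blast
  have Z: "Z \<subseteq> V2" using assms(2) unfolding dominating_def by blast
  have "symdiff (A \<union> Z) (B \<union> Z) = symdiff A B"
    unfolding symdiff_def using A B Z assms(3) by blast
  then have s: "card (symdiff (A \<union> Z) (B \<union> Z)) = 1" using rc_step.hyps(3) by simp
  show ?case by (rule rc.rc_step[OF dom_union[OF rc_step.hyps(1) assms(2)] c s rc_step.IH])
qed

lemma cograph_inv: "cograph V E \<Longrightarrow> finite V \<and> V \<noteq> {} \<and> (\<forall>e\<in>E. e \<subseteq> V)"
  by (induction rule: cograph.induct) (auto simp: join_edges_def)

lemma canon_univ: assumes "finite V" "V \<noteq> {}" "dominating V E {v}"
  shows "canonical V E {v}"
  unfolding canonical_def min_dominating_def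
proof (intro conjI allI impI)
  show "dominating V E {v}" by fact
  fix D assume D: "dominating V E D"
  then have fD: "finite D" using assms(1) finite_subset unfolding dominating_def by blast
  have "D \<noteq> {}" using D assms(2) unfolding dominating_def by blast
  then show "card {v} \<le> card D" using fD by (simp add: Suc_leI card_gt_0_iff)
  have vV: "v \<in> V" using assms(3) unfolding dominating_def by blast
  have DV: "D \<subseteq> V" using D unfolding dominating_def by blast
  have "card (insert v D) \<le> card D + 1" using fD by (simp add: card_insert_if)
  then have r1: "rc V E (card D + 1) D (insert v D)" using vV DV by (intro rc_up[OF assms(1) D]) auto
  have r2: "rc V E (card D + 1) (insert v D) {v}"
    using vV DV \<open>card (insert v D) \<le> card D + 1\<close> by (intro rc_down[OF assms(1) assms(3)]) auto
  show "reconf V E (card D + 1) D {v}" by (rule rc_reconf[OF rc_trans[OF r1 r2]])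
qed

lemma dom_join_both: assumes "A \<subseteq> V1\<union>V2" "a\<in>A" "a\<in>V1" "b\<in>A" "b\<in>V2"
  shows "dominating (V1\<union>V2) (E1\<union>E2\<union>join_edges V1 V2) A"
  unfolding dominating_def
proof (intro conjI ballI)
  fix x assume "x \<in> V1 \<union> V2"
  then show "x \<in> A \<or> (\<exists>u\<in>A. {u, x} \<in> E1 \<union> E2 \<union> join_edges V1 V2)"
  proof
    assume "x \<in> V1"
    then have "{b, x} \<in> join_edges V1 V2" unfolding join_edges_def using assms(5)
      by (auto simp: insert_commute)
    then show ?thesis using assms(4) by blast
  next
    assume "x \<in> V2"
    then have "{a, x} \<in> join_edges V1 V2" unfolding join_edges_def using assms(3) by auto
    then show ?thesis using assms(2) by blast
  qed
qed (use assms in auto)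

lemma card3: "card {x, y, z} \<le> 3"
  by (simp add: card_insert_if)

lemma join_P: assumes "finite V1" "finite V2" "V1\<inter>V2={}" "A \<subseteq> V1\<union>V2" "a\<in>A" "a\<in>V1" "b\<in>A" "b\<in>V2"
  "u\<in>V1" "w\<in>V2"
  shows "rc (V1\<union>V2) (E1\<union>E2\<union>join_edges V1 V2) (card A + 1) A {u,w}"
proof -
  let ?E = "E1\<union>E2\<union>join_edges V1 V2"
  have fV: "finite (V1 \<union> V2)" using assms by auto
  have fA: "finite A" using assms(4) fV finite_subset by blast
  have "a \<noteq> b" using assms by blast
  then have "card {a,b} = 2" by simp
  moreover have "{a,b} \<subseteq> A" using assms by blast
  ultimately have c2: "2 \<le> card A" using fA card_mono by metis
  have dA: "dominating (V1\<union>V2) ?E A" using dom_join_both[OF assms(4,5,6,7,8)] .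
  have dub: "dominating (V1\<union>V2) ?E {u,b}" using dom_join_both[of "{u,b}" V1 V2 u b] assms by auto
  have duw: "dominating (V1\<union>V2) ?E {u,w}" using dom_join_both[of "{u,w}" V1 V2 u w] assms by auto
  have ci: "card (insert u A) \<le> card A + 1" using fA by (simp add: card_insert_if)
  have s1: "rc (V1\<union>V2) ?E (card A + 1) A (insert u A)"
    using rc_up[OF fV dA] ci assms by blast
  have s2: "rc (V1\<union>V2) ?E (card A + 1) (insert u A) {u,b}"
    using rc_down[OF fV dub] ci assms by blast
  have c3: "card {u,b,w} \<le> card A + 1" using card3[of u b w] c2 by linarith
  have s3: "rc (V1\<union>V2) ?E (card A + 1) {u,b} {u,b,w}"
    using rc_up[OF fV dub] c3 assms by blast
  have s4: "rc (V1\<union>V2) ?E (card A + 1) {u,b,w} {u,w}"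
    using rc_down[OF fV duw] c3 assms by blast
  show ?thesis using rc_trans[OF s1 rc_trans[OF s2 rc_trans[OF s3 s4]]] .
qed

lemma join_case: assumes "finite V1" "finite V2" "V1\<inter>V2={}" "V1 \<noteq> {}" "V2 \<noteq> {}"
  shows "\<exists>Ds. canonical (V1\<union>V2) (E1\<union>E2\<union>join_edges V1 V2) Ds"
proof -
  let ?V = "V1 \<union> V2"
  let ?E = "E1\<union>E2\<union>join_edges V1 V2"
  have fV: "finite ?V" using assms by auto
  show ?thesis
  proof (cases "\<exists>v. dominating ?V ?E {v}")
    case True
    then obtain v where "dominating ?V ?E {v}" by blast
    then show ?thesis using canon_univ[OF fV] assms by blast
  next
    case nu: False
    obtain u w where uw: "u \<in> V1" "w \<in> V2" using assms by blast
    have duw: "dominating ?V ?E {u,w}" using dom_join_both[of "{u,w}" V1 V2 u w] uw by auto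
    have two: "2 \<le> card D" if D: "dominating ?V ?E D" for D
    proof -
      have fD: "finite D" using D fV finite_subset unfolding dominating_def by blast
      have "D \<noteq> {}" using D assms unfolding dominating_def by blast
      moreover have "card D \<noteq> 1"
      proof
        assume "card D = 1"
        then obtain x where "D = {x}" by (rule card_1_singletonE)
        then show False using nu D by blast
      qed
      ultimately show ?thesis using fD by (cases "card D") auto
    qed
    have "u \<noteq> w" using uw assms by blast
    then have cuw: "card {u,w} = 2" by simp
    have "canonical ?V ?E {u,w}"
      unfolding canonical_def min_dominating_def
    proof (intro conjI allI impI)
      show "dominating ?V ?E {u,w}" by fact
      fix D assume D: "dominating ?V ?E D"
      show "card {u,w} \<le> card D" using two[OF D] cuw by simp
      have c2: "2 \<le> card D" by (rule two[OF D])
      have DV: "D \<subseteq> ?V" using D unfolding dominating_def by blast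
      have fD: "finite D" using DV fV finite_subset by blast
      have "rc ?V ?E (card D + 1) D {u,w}"
      proof (cases "D \<inter> V1 \<noteq> {} \<and> D \<inter> V2 \<noteq> {}")
        case True
        then obtain a b where "a \<in> D" "a \<in> V1" "b \<in> D" "b \<in> V2" by blast
        then show ?thesis using join_P[OF assms(1,2,3) DV _ _ _ _ uw] by blast
      next
        case False
        have "D \<noteq> {}" using c2 by auto
        then obtain a where a: "a \<in> D" by blast
        have ci: "card (insert x D) \<le> card D + 1" for x using fD by (simp add: card_insert_if)
        show ?thesis
        proof (cases "D \<inter> V2 = {}")
          case True
          then have aV1: "a \<in> V1" using a DV by blast
          have daw: "dominating ?V ?E {a,w}" using dom_join_both[of "{a,w}" V1 V2 a w] aV1 uw by auto
          have s1: "rc ?V ?E (card D + 1) D (insert w D)" using rc_up[OF fV D] ci DV uw by blast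
          have s2: "rc ?V ?E (card D + 1) (insert w D) {a,w}" using rc_down[OF fV daw] ci DV uw a by blast
          have "rc ?V ?E (card {a,w} + 1) {a,w} {u,w}"
            using join_P[OF assms(1,2,3), of "{a,w}" a w] aV1 uw by blast
          moreover have "card {a,w} + 1 \<le> card D + 1" using c2 by (auto simp: card_insert_if)
          ultimately have s3: "rc ?V ?E (card D + 1) {a,w} {u,w}" using rc_mono by blast
          show ?thesis using rc_trans[OF s1 rc_trans[OF s2 s3]] .
        next
          case F2: False
          then have "D \<inter> V1 = {}" using False by blast
          then have aV2: "a \<in> V2" using a DV by blast
          have dua: "dominating ?V ?E {u,a}" using dom_join_both[of "{u,a}" V1 V2 u a] aV2 uw by auto
          have s1: "rc ?V ?E (card D + 1) D (insert u D)" using rc_up[OF fV D] ci DV uw by blast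
          have s2: "rc ?V ?E (card D + 1) (insert u D) {u,a}" using rc_down[OF fV dua] ci DV uw a by blast
          have "rc ?V ?E (card {u,a} + 1) {u,a} {u,w}"
            using join_P[OF assms(1,2,3), of "{u,a}" u a] aV2 uw by blast
          moreover have "card {u,a} + 1 \<le> card D + 1" using c2 by (auto simp: card_insert_if)
          ultimately have s3: "rc ?V ?E (card D + 1) {u,a} {u,w}" using rc_mono by blast
          show ?thesis using rc_trans[OF s1 rc_trans[OF s2 s3]] .
        qed
      qed
      then show "reconf ?V ?E (card D + 1) D {u,w}" by (rule rc_reconf)
    qed
    then show ?thesis by blast
  qed
qed

lemma union_case: assumes "finite V1" "finite V2" "V1\<inter>V2={}"
  "\<forall>e\<in>E1. e \<subseteq> V1" "\<forall>e\<in>E2. e\<subseteq>V2"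
  "canonical V1 E1 S1" "canonical V2 E2 S2"
  shows "canonical (V1\<union>V2) (E1\<union>E2) (S1 \<union> S2)"
  unfolding canonical_def min_dominating_def
proof (intro conjI allI impI)
  have d1: "dominating V1 E1 S1" and d2: "dominating V2 E2 S2"
    using assms(6,7) unfolding canonical_def min_dominating_def by auto
  show "dominating (V1\<union>V2) (E1\<union>E2) (S1 \<union> S2)" using dom_union[OF d1 d2] .
  fix D assume D: "dominating (V1\<union>V2) (E1\<union>E2) D"
  have D1: "dominating V1 E1 (D \<inter> V1)" using dom_restrict[OF D assms(4,5,3)] .
  have D2: "dominating V2 E2 (D \<inter> V2)"
    using dom_restrict[of V2 V1 E2 E1 D] D assms(4,5,3) by (auto simp: Un_commute Int_commute)
  have m1: "card S1 \<le> card (D \<inter> V1)" using assms(6) D1 unfolding canonical_def min_dominating_def by auto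
  have m2: "card S2 \<le> card (D \<inter> V2)" using assms(7) D2 unfolding canonical_def min_dominating_def by auto
  have DV: "D \<subseteq> V1 \<union> V2" using D unfolding dominating_def by blast
  have fD: "finite D" using DV assms(1,2) finite_subset by blast
  have Dsplit: "D = (D \<inter> V1) \<union> (D \<inter> V2)" using DV by blast
  have cD: "card D = card (D \<inter> V1) + card (D \<inter> V2)"
    using fD assms(3) by (subst Dsplit) (rule card_Un_disjoint, auto)
  show "card (S1 \<union> S2) \<le> card D" using card_Un_le[of S1 S2] m1 m2 cD by linarith
  have r1: "rc V1 E1 (card (D \<inter> V1) + 1) (D \<inter> V1) S1"
    using assms(6) D1 reconf_rc unfolding canonical_def by blast
  have t1: "rc (V1\<union>V2) (E1\<union>E2) (card (D \<inter> V1) + 1 + card (D \<inter> V2)) ((D \<inter> V1) \<union> (D \<inter> V2)) (S1 \<union> (D \<inter> V2))"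
    using rc_lift[OF r1 D2 assms(3,1,2)] .
  have r2: "rc V2 E2 (card (D \<inter> V2) + 1) (D \<inter> V2) S2"
    using assms(7) D2 reconf_rc unfolding canonical_def by blast
  have "V2 \<inter> V1 = {}" using assms(3) by blast
  from rc_lift[OF r2 d1 this assms(2,1)]
  have t2': "rc (V2\<union>V1) (E2\<union>E1) (card (D \<inter> V2) + 1 + card S1) ((D \<inter> V2) \<union> S1) (S2 \<union> S1)" .
  have eqs: "V2\<union>V1 = V1\<union>V2" "E2\<union>E1 = E1\<union>E2" "(D \<inter> V2) \<union> S1 = S1 \<union> (D \<inter> V2)" "S2 \<union> S1 = S1 \<union> S2" by blast+
  have t2: "rc (V1\<union>V2) (E1\<union>E2) (card D + 1) (S1 \<union> (D \<inter> V2)) (S1 \<union> S2)"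
    using rc_mono[OF t2'[unfolded eqs]] m1 cD by simp
  have t1': "rc (V1\<union>V2) (E1\<union>E2) (card D + 1) D (S1 \<union> (D \<inter> V2))"
    using t1 cD Dsplit[symmetric] by (simp add: algebra_simps)
  show "reconf (V1\<union>V2) (E1\<union>E2) (card D + 1) D (S1 \<union> S2)"
    using rc_trans[OF t1' t2] by (rule rc_reconf)
qed

theorem lemma5:
  fixes V :: "'a set" and E :: "'a set set"
  assumes "cograph V E"
  shows "\<exists>Ds. canonical V E Ds"
  using assms
proof (induction rule: cograph.induct)
  case (single v)
  have "dominating {v} {} {v}" unfolding dominating_def by auto
  then show ?case using canon_univ[of "{v}" "{}" v] by auto
next
  case (union V1 E1 V2 E2)
  then obtain S1 S2 where "canonical V1 E1 S1" "canonical V2 E2 S2" by blast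
  moreover note i1 = cograph_inv[OF union.hyps(1)] and i2 = cograph_inv[OF union.hyps(2)]
  ultimately have "canonical (V1 \<union> V2) (E1 \<union> E2) (S1 \<union> S2)"
    using union.hyps(3) by (intro union_case) auto
  then show ?case by blast
next
  case (join V1 E1 V2 E2)
  note i1 = cograph_inv[OF join.hyps(1)] and i2 = cograph_inv[OF join.hyps(2)]
  show ?case using join.hyps(3) i1 i2 by (intro join_case) auto
qed

end
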